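(* Let $P\subseteq M_{\mathbb R}$ be a $d$-dimensional lattice simplex ($M$ of rank $d$) with vertices $v_0,\dots,v_d$, let $\tilde v_i:=(v_i,1)\in M\oplus\mathbb Z$, and let $\Pi:=\{\sum_{i=0}^d\lambda_i\tilde v_i:0\le\lambda_i<1\}$ be the half-open parallelepiped they span, with interior $\mathrm{int}(\Pi)=\{\sum\lambda_i\tilde v_i:0<\lambda_i<1\}$. Then \[\widetilde S(P,t)=\sum_{x\in\mathrm{int}(\Pi)\cap(M\oplus\mathbb Z)}t^{x_{d+1}},\] where $x_{d+1}$ is the last coordinate of $x$. In particular $\deg\widetilde S(P,t)\le\deg h^*_P(t)$.
   Context: For a lattice polytope $Q$ of dimension $k$, $h^*_Q(t)=(1-t)^{k+1}\sum_{j\ge0}\#(jQ\cap\text{lattice})\,t^j$, with $h^*_\emptyset=1$, $\dim\emptyset=-1$. For an Eulerian poset $\mathcal P$ of rank $d$ with minimum $\hat0$, maximum $\hat1$: if $d=0$, $g_{\mathcal P}=h_{\mathcal P}=1$; if $d>0$, $h_{\mathcal P}(t)=\sum_{\hat0<x\le\hat1}(t-1)^{\mathrm{rk}(x)-1}g_{[x,\hat1]}(t)$ and $g_{\mathcal P}(t)=\sum_{0\le i<d/2}(h_i-h_{i-1})t^i$ where $h_{\mathcal P}=\sum h_it^i$, $h_{-1}=0$. For faces $F\le P$ (including $\emptyset$), $[F,P]$ is the poset of faces between them. $\widetilde S(P,t)=\sum_{\emptyset\le F\le P}(-1)^{\dim P-\dim F}h^*_F(t)\,g_{[F,P]}(t)$.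 *)

theory Defs
  imports "HOL-Analysis.Analysis" "HOL-Computational_Algebra.Polynomial_FPS"
begin

text \<open>The lattice M = Z^d inside M_R = R^d, with d = CARD('n).\<close>
definition lattice_pts :: "(real ^ 'n) set" where
  "lattice_pts = {x. \<forall>i. x $ i \<in> \<int>}"

text \<open>Ehrhart h*-polynomial (as a formal power series), with h*_{empty} = 1
  and dim Q = aff_dim Q.\<close>
definition hstar :: "(real ^ 'n) set \<Rightarrow> int fps" where
  "hstar Q = (if Q = {} then 1 else
     (1 - fps_X) ^ (nat (aff_dim Q) + 1) *
     Abs_fps (\<lambda>j. int (card (lattice_pts \<inter> ((\<lambda>x. real j *\<^sub>R x) ` Q)))))"

definition face_rank :: "(real ^ 'n) set \<Rightarrow> (real ^ 'n) set \<Rightarrow> nat" where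
  "face_rank F P = nat (aff_dim P - aff_dim F)"

definition g_trunc :: "nat \<Rightarrow> int poly \<Rightarrow> int poly" where
  "g_trunc d h = (\<Sum>i\<in>{i. 2 * i < d}.
      monom (coeff h i - (if i = 0 then 0 else coeff h (i - 1))) i)"

text \<open>g- and h-polynomials of the Eulerian poset [F,P] of faces of P between F and P,
  computed with a fuel argument (the fuel rank+1 is always enough since ranks decrease).\<close>
fun g_fuel :: "nat \<Rightarrow> (real ^ 'n) set \<Rightarrow> (real ^ 'n) set \<Rightarrow> int poly" where
  "g_fuel 0 F P = 1"
| "g_fuel (Suc k) F P =
     (if face_rank F P = 0 then 1
      else g_trunc (face_rank F P)
        (\<Sum>G\<in>{G. G face_of P \<and> F \<subset> G}.
            [:-1, 1:] ^ (face_rank F G - 1) * g_fuel k G P))"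

definition g_interval :: "(real ^ 'n) set \<Rightarrow> (real ^ 'n) set \<Rightarrow> int poly" where
  "g_interval F P = g_fuel (face_rank F P + 1) F P"

definition Stilde :: "(real ^ 'n) set \<Rightarrow> int fps" where
  "Stilde P = (\<Sum>F\<in>{F. F face_of P}.
     (-1) ^ face_rank F P * hstar F * fps_of_poly (g_interval F P))"

end

theory Submission
  imports Defs
begin


lemma sum_Pow_insert:
  fixes f :: "'a set \<Rightarrow> 'b::comm_monoid_add"
  assumes "finite W" "a \<notin> W"
  shows "(\<Sum>K\<in>Pow (insert a W). f K) = (\<Sum>K\<in>Pow W. f K) + (\<Sum>K\<in>Pow W. f (insert a K))"
proof -
  have "Pow (insert a W) = Pow W \<union> insert a ` Pow W" by (rule Pow_insert)
  moreover have "Pow W \<inter> insert a ` Pow W = {}" using assms by auto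
  moreover have "inj_on (insert a) (Pow W)" using assms unfolding inj_on_def by (metis PowD insert_ident subsetD)
  ultimately show ?thesis using assms
    by (simp add: sum.union_disjoint sum.reindex)
qed

lemma sum_Pow_card:
  fixes x :: "'b::comm_semiring_1"
  assumes "finite W"
  shows "(\<Sum>K\<in>Pow W. x ^ card K) = (1 + x) ^ card W"
  using assms
proof (induction W rule: finite_induct)
  case empty then show ?case by simp
next
  case (insert a W)
  have "(\<Sum>K\<in>Pow (insert a W). x ^ card K) = (\<Sum>K\<in>Pow W. x ^ card K) + (\<Sum>K\<in>Pow W. x ^ card (insert a K))"
    using insert by (simp add: sum_Pow_insert)
  also have "(\<Sum>K\<in>Pow W. x ^ card (insert a K)) = (\<Sum>K\<in>Pow W. x * x ^ card K)"
  proof (rule sum.cong)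
    fix K assume "K \<in> Pow W"
    then have "card (insert a K) = Suc (card K)" using insert by (meson PowD card_insert_disjoint finite_subset subsetD)
    then show "x ^ card (insert a K) = x * x ^ card K" by simp
  qed simp
  finally show ?case using insert by (simp add: sum_distrib_left[symmetric] algebra_simps)
qed

lemma incl_excl:
  fixes f :: "'a set \<Rightarrow> int"
  assumes "finite U"
  shows "(\<Sum>I\<in>Pow U. (-1) ^ (card U - card I) * (\<Sum>J\<in>Pow I. f J)) = f U"
  using assms
proof (induction U arbitrary: f rule: finite_induct)
  case empty then show ?case by simp
next
  case (insert a U)
  have cI: "card (insert a I) = Suc (card I)" if "I \<in> Pow U" for I
    using insert that by (meson PowD card_insert_disjoint finite_subset subsetD)
  have cle: "card I \<le> card U" if "I \<in> Pow U" for I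
    using insert that by (simp add: card_mono)
  have G: "(\<Sum>J\<in>Pow (insert a I). f J) = (\<Sum>J\<in>Pow I. f J) + (\<Sum>J\<in>Pow I. f (insert a J))"
    if "I \<in> Pow U" for I
    using insert that by (intro sum_Pow_insert) (auto intro: finite_subset)
  have "(\<Sum>I\<in>Pow (insert a U). (-1) ^ (card (insert a U) - card I) * (\<Sum>J\<in>Pow I. f J))
     = (\<Sum>I\<in>Pow U. (-1) ^ (Suc (card U) - card I) * (\<Sum>J\<in>Pow I. f J))
       + (\<Sum>I\<in>Pow U. (-1) ^ (Suc (card U) - card (insert a I)) * (\<Sum>J\<in>Pow (insert a I). f J))"
    using insert by (simp add: sum_Pow_insert)
  also have "\<dots> = (\<Sum>I\<in>Pow U. (-1) ^ (card U - card I) * (\<Sum>J\<in>Pow I. f (insert a J)))"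
  proof -
    have "(\<Sum>I\<in>Pow U. (-1) ^ (Suc (card U) - card (insert a I)) * (\<Sum>J\<in>Pow (insert a I). f J))
      = (\<Sum>I\<in>Pow U. (-1) ^ (card U - card I) * (\<Sum>J\<in>Pow I. f J))
        + (\<Sum>I\<in>Pow U. (-1) ^ (card U - card I) * (\<Sum>J\<in>Pow I. f (insert a J)))"
      by (simp add: cI G distrib_left sum.distrib)
    moreover have "(\<Sum>I\<in>Pow U. (-1) ^ (Suc (card U) - card I) * (\<Sum>J\<in>Pow I. f J))
        = - (\<Sum>I\<in>Pow U. (-1) ^ (card U - card I) * (\<Sum>J\<in>Pow I. f J))"
      by (simp add: sum_negf[symmetric] Suc_diff_le cle)
    ultimately show ?thesis by simp
  qed
  also have "\<dots> = f (insert a U)" using insert.IH[of "\<lambda>J. f (insert a J)"] by simp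
  finally show ?case .
qed

lemma geom_poly:
  fixes r :: nat
  defines "x \<equiv> [:-1, 1:] :: int poly"
  assumes that: "finite W"
  shows "(\<Sum>K\<in>{K. K \<subseteq> W \<and> K \<noteq> {}}. x ^ (card K - 1)) = (\<Sum>i<card W. [:0,1:] ^ i)"
proof -
  have x0: "x \<noteq> 0" unfolding x_def by simp
  have e: "{K. K \<subseteq> W \<and> K \<noteq> {}} = Pow W - {{}}" by auto
  have "(\<Sum>K\<in>{K. K \<subseteq> W \<and> K \<noteq> {}}. x ^ (card K - 1)) * x
      = (\<Sum>K\<in>Pow W - {{}}. x ^ card K)"
    unfolding e sum_distrib_right
  proof (rule sum.cong)
    fix K assume "K \<in> Pow W - {{}}"
    then have "finite K" "K \<noteq> {}" using that by (auto intro: finite_subset)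
    then have "card K \<ge> 1" by (simp add: Suc_leI card_gt_0_iff)
    then show "x ^ (card K - 1) * x = x ^ card K" by (metis le_add_diff_inverse2 power_Suc2 Suc_eq_plus1)
  qed simp
  also have "\<dots> = (1 + x) ^ card W - 1"
    using sum_Pow_card[OF that, of x] that by (simp add: sum_diff1)
  also have "1 + x = [:0,1:]" unfolding x_def by (simp add: one_pCons)
  also have "[:0,1:] ^ card W - 1 = (\<Sum>i<card W. [:0,1:] ^ i) * x"
  proof -
    have "[:0,1::int:] - 1 = x" unfolding x_def by (simp add: one_pCons)
    then show ?thesis unfolding power_diff_1_eq by (simp add: mult.commute)
  qed
  finally show ?thesis using x0 by simp
qed

lemma X_pow_monom: "[:0,1::'a::comm_semiring_1:] ^ n = monom 1 n"
  by (simp add: monom_altdef)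

lemma coeff_geom: "coeff (\<Sum>i<r. [:0,1::int:] ^ i) j = (if j < r then 1 else 0)"
  by (simp add: coeff_sum X_pow_monom coeff_monom)

lemma g_trunc_geom:
  assumes "r > 0"
  shows "g_trunc r (\<Sum>i<r. [:0,1::int:] ^ i) = 1"
proof -
  have "g_trunc r (\<Sum>i<r. [:0,1::int:] ^ i) = (\<Sum>i\<in>{i. 2 * i < r}. monom (if i = 0 then 1 else 0) i)"
    unfolding g_trunc_def coeff_geom by (intro sum.cong) auto
  also have "\<dots> = (\<Sum>i\<in>{i. 2 * i < r}. if i = 0 then 1 else 0)"
    by (intro sum.cong) auto
  also have "\<dots> = 1"
  proof -
    have "finite {i. 2 * i < r}" by (rule finite_subset[of _ "{..<r}"]) auto
    moreover have "0 \<in> {i. 2 * i < r}" using assms by simp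
    ultimately show ?thesis by (simp add: sum.delta)
  qed
  finally show ?thesis .
qed



definition Nset :: "'a set \<Rightarrow> nat \<Rightarrow> ('a \<Rightarrow> nat) set" where
  "Nset I r = {n \<in> I \<rightarrow>\<^sub>E (UNIV::nat set). (\<Sum>i\<in>I. n i) = r}"

lemma finite_Nset: assumes "finite I" shows "finite (Nset I r)"
proof (rule finite_subset)
  show "Nset I r \<subseteq> I \<rightarrow>\<^sub>E {0..r}"
  proof
    fix n assume n: "n \<in> Nset I r"
    have "n i \<le> r" if "i \<in> I" for i
      using n that assms unfolding Nset_def by (auto intro: member_le_sum)
    then show "n \<in> I \<rightarrow>\<^sub>E {0..r}" using n unfolding Nset_def by auto
  qed
  show "finite (I \<rightarrow>\<^sub>E {0..r})" using assms by (simp add: finite_PiE)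
qed

lemma card_Nset_insert:
  assumes "finite I" "a \<notin> I"
  shows "card (Nset (insert a I) r) = (\<Sum>i=0..r. card (Nset I i))"
proof -
  define g where "g = (\<lambda>(i::nat, n'::'a \<Rightarrow> nat). n'(a := r - i))"
  have inj: "inj_on g (Sigma {0..r} (Nset I))"
  proof (rule inj_onI)
    fix p q assume p: "p \<in> Sigma {0..r} (Nset I)" and q: "q \<in> Sigma {0..r} (Nset I)" and e: "g p = g q"
    obtain i n where pi: "p = (i, n)" by (cases p)
    obtain j m where qj: "q = (j, m)" by (cases q)
    have nE: "n \<in> I \<rightarrow>\<^sub>E UNIV" "m \<in> I \<rightarrow>\<^sub>E UNIV" using p q pi qj by (auto simp: Nset_def)
    have "n x = m x" for x
    proof (cases "x = a")
      case True then show ?thesis using nE assms by (auto simp: PiE_def extensional_def)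
    next
      case False then show ?thesis using e pi qj g_def by (metis case_prod_conv fun_upd_apply)
    qed
    then have "n = m" by auto
    moreover have "i = (\<Sum>k\<in>I. n k)" "j = (\<Sum>k\<in>I. m k)" using p q pi qj by (auto simp: Nset_def)
    ultimately show "p = q" using pi qj by simp
  qed
  have img: "g ` Sigma {0..r} (Nset I) = Nset (insert a I) r"
  proof
    show "g ` Sigma {0..r} (Nset I) \<subseteq> Nset (insert a I) r"
    proof clarify
      fix i n assume i: "i \<in> {0..r}" and n: "n \<in> Nset I i"
      have s: "(\<Sum>k\<in>I. (n(a := r - i)) k) = i"
        using n assms by (auto simp: Nset_def intro!: sum.cong)
      show "g (i, n) \<in> Nset (insert a I) r"
        using n i s assms unfolding g_def Nset_def by (auto simp: PiE_def extensional_def)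
    qed
    show "Nset (insert a I) r \<subseteq> g ` Sigma {0..r} (Nset I)"
    proof
      fix n assume n: "n \<in> Nset (insert a I) r"
      define i where "i = (\<Sum>k\<in>I. n k)"
      have s: "n a + i = r" using n assms unfolding Nset_def i_def by simp
      have r1: "restrict n I \<in> Nset I i" unfolding Nset_def i_def by auto
      have "g (i, restrict n I) = n"
      proof
        fix x show "g (i, restrict n I) x = n x"
          using n s assms unfolding g_def Nset_def by (auto simp: PiE_def extensional_def)
      qed
      moreover have "(i, restrict n I) \<in> Sigma {0..r} (Nset I)" using r1 s by auto
      ultimately show "n \<in> g ` Sigma {0..r} (Nset I)" by (metis image_eqI)
    qed
  qed
  have "card (Nset (insert a I) r) = card (Sigma {0..r} (Nset I))"
    using card_image[OF inj] img by simp
  also have "\<dots> = (\<Sum>i=0..r. card (Nset I i))"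
    using assms by (simp add: card_SigmaI finite_Nset)
  finally show ?thesis .
qed

lemma ones_fps: "(1 - fps_X) * Abs_fps (\<lambda>n. 1::int) = 1"
proof -
  have "(1::int fps) = (1 - fps_X) * Abs_fps (\<lambda>n. sum (\<lambda>i. fps_nth (1::int fps) i) {0..n})"
    by (rule fps_divide_fps_X_minus1_sum_lemma)
  also have "(\<lambda>n. sum (\<lambda>i. fps_nth (1::int fps) i) {0..n}) = (\<lambda>n. 1)"
    by (auto simp: sum.delta)
  finally show ?thesis by simp
qed

lemma Nset_fps:
  assumes "finite I"
  shows "(1 - fps_X) ^ card I * Abs_fps (\<lambda>r. int (card (Nset I r))) = 1"
  using assms
proof (induction I rule: finite_induct)
  case empty
  have e: "Nset ({}::'a set) r = (if r = 0 then {\<lambda>_. undefined} else {})" for r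
    by (auto simp: Nset_def)
  have "Abs_fps (\<lambda>r. int (card (Nset ({}::'a set) r))) = 1"
    by (intro fps_ext) (simp add: e)
  then show ?case by simp
next
  case (insert a I)
  have "Abs_fps (\<lambda>r. int (card (Nset (insert a I) r)))
      = Abs_fps (\<lambda>r. int (card (Nset I r))) * Abs_fps (\<lambda>n. 1)"
    by (intro fps_ext) (simp add: fps_mult_nth card_Nset_insert insert.hyps)
  then have "(1 - fps_X) ^ card (insert a I) * Abs_fps (\<lambda>r. int (card (Nset (insert a I) r)))
     = ((1 - fps_X) ^ card I * Abs_fps (\<lambda>r. int (card (Nset I r)))) * ((1 - fps_X) * Abs_fps (\<lambda>n. 1))"
    using insert.hyps by (simp add: algebra_simps)
  then show ?case using insert.IH ones_fps by simp
qed



lemma lat_add: "x \<in> lattice_pts \<Longrightarrow> y \<in> lattice_pts \<Longrightarrow> x + y \<in> lattice_pts"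
  by (auto simp: lattice_pts_def)
lemma lat_diff: "x \<in> lattice_pts \<Longrightarrow> y \<in> lattice_pts \<Longrightarrow> x - y \<in> lattice_pts"
  by (auto simp: lattice_pts_def)
lemma lat_zero: "0 \<in> lattice_pts"
  by (auto simp: lattice_pts_def)
lemma lat_scale_nat: "x \<in> lattice_pts \<Longrightarrow> real k *\<^sub>R x \<in> lattice_pts"
  by (auto simp: lattice_pts_def)
lemma lat_sum: "(\<And>i. i \<in> I \<Longrightarrow> f i \<in> lattice_pts) \<Longrightarrow> sum f I \<in> lattice_pts"
proof (induction I rule: infinite_finite_induct)
  case (infinite A) then show ?case by (simp add: lat_zero)
next
  case empty then show ?case by (simp add: lat_zero)
next
  case (insert x F) then show ?case by (simp add: lat_add)
qed

lemma finite_lat_bounded: "finite (lattice_pts \<inter> {y::real^'n. norm y \<le> R})"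
proof (rule finite_subset)
  define N where "N = \<lceil>R\<rceil>"
  show "lattice_pts \<inter> {y::real^'n. norm y \<le> R} \<subseteq> (\<lambda>f. \<chi> i. of_int (f i)) ` (UNIV \<rightarrow>\<^sub>E {-N..N})"
  proof
    fix y :: "real^'n" assume y: "y \<in> lattice_pts \<inter> {y. norm y \<le> R}"
    have yi: "of_int \<lfloor>y $ i\<rfloor> = y $ i" for i
    proof -
      have "y $ i \<in> \<int>" using y by (auto simp: lattice_pts_def)
      then show ?thesis by (metis Ints_cases floor_of_int)
    qed
    have "\<bar>y $ i\<bar> \<le> R" for i using y component_le_norm_cart[of y i] by auto
    have "\<lfloor>y $ i\<rfloor> \<in> {-N..N}" for i
    proof -
      have a: "\<bar>y $ i\<bar> \<le> R" by fact
      have "\<lfloor>-R\<rfloor> \<le> \<lfloor>y $ i\<rfloor>" using a by (intro floor_mono) linarith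
      then have 1: "-N \<le> \<lfloor>y $ i\<rfloor>" unfolding N_def by (simp add: floor_minus)
      have "real_of_int \<lfloor>y $ i\<rfloor> \<le> y $ i" by (rule of_int_floor_le)
      moreover have "R \<le> real_of_int N" unfolding N_def by (rule le_of_int_ceiling)
      ultimately have "real_of_int \<lfloor>y $ i\<rfloor> \<le> real_of_int N" using a by linarith
      then have "\<lfloor>y $ i\<rfloor> \<le> N" by simp
      with 1 show ?thesis by simp
    qed
    then have "(\<lambda>i. \<lfloor>y $ i\<rfloor>) \<in> UNIV \<rightarrow>\<^sub>E {-N..N}" by auto
    moreover have "y = (\<chi> i. of_int ((\<lambda>i. \<lfloor>y $ i\<rfloor>) i))" by (simp add: vec_eq_iff yi)
    ultimately show "y \<in> (\<lambda>f. \<chi> i. of_int (f i)) ` (UNIV \<rightarrow>\<^sub>E {-N..N})"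
      using image_eqI[of y "(\<lambda>f. \<chi> i. of_int (f i))" "\<lambda>i. \<lfloor>y $ i\<rfloor>"] by blast
  qed
  show "finite ((\<lambda>f. \<chi> i. of_int (f i)) ` (UNIV \<rightarrow>\<^sub>E {-N..N}) :: (real^'n) set)"
    by (intro finite_imageI finite_PiE) auto
qed

lemma sum_if_restrict:
  fixes g :: "'a \<Rightarrow> 'b::comm_monoid_add"
  assumes "finite I" "J \<subseteq> I"
  shows "(\<Sum>i\<in>I. if i \<in> J then g i else 0) = sum g J"
proof -
  have "(\<Sum>i\<in>I. if i \<in> J then g i else 0) = sum g (I \<inter> J)"
    using assms by (simp add: sum.inter_restrict)
  also have "I \<inter> J = J" using assms by auto
  finally show ?thesis .
qed

definition Par :: "(nat \<Rightarrow> real^'n) \<Rightarrow> nat set \<Rightarrow> nat \<Rightarrow> (real^'n) set" where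
  "Par v I m = {y \<in> lattice_pts. \<exists>c. (\<forall>i\<in>I. 0 \<le> c i \<and> c i < 1) \<and>
      y = (\<Sum>i\<in>I. c i *\<^sub>R v i) \<and> (\<Sum>i\<in>I. c i) = real m}"

definition Opn :: "(nat \<Rightarrow> real^'n) \<Rightarrow> nat set \<Rightarrow> nat \<Rightarrow> (real^'n) set" where
  "Opn v I m = {y \<in> lattice_pts. \<exists>c. (\<forall>i\<in>I. 0 < c i \<and> c i < 1) \<and>
      y = (\<Sum>i\<in>I. c i *\<^sub>R v i) \<and> (\<Sum>i\<in>I. c i) = real m}"

lemma Opn_sub_Par: "Opn v I m \<subseteq> Par v I m"
proof
  fix y assume "y \<in> Opn v I m"
  then obtain c where "y \<in> lattice_pts" "\<forall>i\<in>I. 0 < c i \<and> c i < 1"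
      "y = (\<Sum>i\<in>I. c i *\<^sub>R v i)" "(\<Sum>i\<in>I. c i) = real m"
    unfolding Opn_def by blast
  then show "y \<in> Par v I m" unfolding Par_def by (auto intro!: exI[of _ c] less_imp_le)
qed

lemma finite_Par: assumes "finite I" shows "finite (Par v I m)"
proof (rule finite_subset[OF _ finite_lat_bounded])
  show "Par v I m \<subseteq> lattice_pts \<inter> {y. norm y \<le> (\<Sum>i\<in>I. norm (v i))}"
  proof
    fix y assume "y \<in> Par v I m"
    then obtain c where y: "y \<in> lattice_pts" "\<forall>i\<in>I. 0 \<le> c i \<and> c i < 1" "y = (\<Sum>i\<in>I. c i *\<^sub>R v i)"
      unfolding Par_def by blast
    have "norm y \<le> (\<Sum>i\<in>I. norm (c i *\<^sub>R v i))" using y(3) norm_sum by blast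
    also have "\<dots> \<le> (\<Sum>i\<in>I. norm (v i))"
    proof (rule sum_mono)
      fix i assume "i \<in> I"
      then have "\<bar>c i\<bar> \<le> 1" using y(2) by auto
      then show "norm (c i *\<^sub>R v i) \<le> norm (v i)"
        by (simp add: mult_left_le_one_le)
    qed
    finally show "y \<in> lattice_pts \<inter> {y. norm y \<le> (\<Sum>i\<in>I. norm (v i))}" using y by auto
  qed
qed

lemma finite_Opn: "finite I \<Longrightarrow> finite (Opn v I m)"
  using finite_Par Opn_sub_Par finite_subset by metis

locale splx =
  fixes v :: "nat \<Rightarrow> real ^ 'n" and d :: nat
  assumes vlat: "\<forall>i\<le>d. v i \<in> lattice_pts"
    and vinj: "inj_on v {..d}"
    and vindep: "\<not> affine_dependent (v ` {..d})"
begin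

abbreviation "D \<equiv> {..d}"
abbreviation "C I \<equiv> convex hull (v ` I)"

lemma uniq:
  assumes I: "I \<subseteq> D" and e1: "(\<Sum>i\<in>I. a i *\<^sub>R v i) = (\<Sum>i\<in>I. b i *\<^sub>R v i)"
    and e2: "(\<Sum>i\<in>I. a i) = (\<Sum>i\<in>I. b i)" and i: "i \<in> I"
  shows "a i = b i"
proof -
  have fin: "finite I" using I finite_subset by blast
  have inj: "inj_on v I" using vinj I inj_on_subset by blast
  have ind: "\<not> affine_dependent (v ` I)"
    using vindep I affine_dependent_subset image_mono by metis
  define U where "U = (\<lambda>x. a (inv_into I v x) - b (inv_into I v x))"
  have s1: "sum U (v ` I) = 0"
    using e2 inj fin by (simp add: sum.reindex U_def sum_subtractf)
  have s2: "(\<Sum>x\<in>v ` I. U x *\<^sub>R x) = 0"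
    using e1 inj fin by (simp add: sum.reindex U_def scaleR_diff_left sum_subtractf)
  have "\<forall>x\<in>v ` I. U x = 0"
    using ind s1 s2 affine_dependent_explicit_finite[of "v ` I"] fin by auto
  then show ?thesis using i inj by (auto simp: U_def)
qed

lemma conv_char:
  assumes I: "I \<subseteq> D"
  shows "x \<in> C I \<longleftrightarrow> (\<exists>u. (\<forall>i\<in>I. 0 \<le> u i) \<and> (\<Sum>i\<in>I. u i) = 1 \<and> x = (\<Sum>i\<in>I. u i *\<^sub>R v i))"
proof -
  have fin: "finite I" using I finite_subset by blast
  have inj: "inj_on v I" using vinj I inj_on_subset by blast
  show ?thesis
  proof
    assume "x \<in> C I"
    then obtain u where u: "\<forall>x\<in>v ` I. 0 \<le> u x" "sum u (v ` I) = 1" "(\<Sum>x\<in>v ` I. u x *\<^sub>R x) = x"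
      using convex_hull_finite[of "v ` I"] fin by auto
    then show "\<exists>u. (\<forall>i\<in>I. 0 \<le> u i) \<and> (\<Sum>i\<in>I. u i) = 1 \<and> x = (\<Sum>i\<in>I. u i *\<^sub>R v i)"
      using inj by (intro exI[of _ "u \<circ> v"]) (auto simp: sum.reindex)
  next
    assume "\<exists>u. (\<forall>i\<in>I. 0 \<le> u i) \<and> (\<Sum>i\<in>I. u i) = 1 \<and> x = (\<Sum>i\<in>I. u i *\<^sub>R v i)"
    then obtain u where u: "\<forall>i\<in>I. 0 \<le> u i" "(\<Sum>i\<in>I. u i) = 1" "x = (\<Sum>i\<in>I. u i *\<^sub>R v i)" by blast
    define w where "w = (\<lambda>y. u (inv_into I v y))"
    have "(\<forall>y\<in>v ` I. 0 \<le> w y) \<and> sum w (v ` I) = 1 \<and> (\<Sum>y\<in>v ` I. w y *\<^sub>R y) = x"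
      using u inj by (simp add: w_def sum.reindex)
    then show "x \<in> C I" using convex_hull_finite[of "v ` I"] fin by auto
  qed
qed

end



context splx begin

lemma finD: "I \<subseteq> D \<Longrightarrow> finite I" using finite_subset by blast

lemma vert_in_hull:
  assumes I: "I \<subseteq> D" and i: "i \<in> D" and h: "v i \<in> C I"
  shows "i \<in> I"
proof (rule ccontr)
  assume ni: "i \<notin> I"
  obtain u where u: "\<forall>k\<in>I. 0 \<le> u k" "(\<Sum>k\<in>I. u k) = 1" "v i = (\<Sum>k\<in>I. u k *\<^sub>R v k)"
    using conv_char[OF I] h by blast
  define a where "a = (\<lambda>k. if k = i then 0 else u k)"
  define b where "b = (\<lambda>k::nat. if k = i then 1 else (0::real))"
  have fI: "finite I" using finD[OF I] .
  have aI: "(\<Sum>k\<in>I. a k) = (\<Sum>k\<in>I. u k)" "(\<Sum>k\<in>I. a k *\<^sub>R v k) = (\<Sum>k\<in>I. u k *\<^sub>R v k)"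
    using ni by (auto simp: a_def intro!: sum.cong)
  have bI: "(\<Sum>k\<in>I. b k) = 0" "(\<Sum>k\<in>I. b k *\<^sub>R v k) = 0"
    using ni by (auto simp: b_def intro!: sum.neutral)
  have "(\<Sum>k\<in>insert i I. a k *\<^sub>R v k) = (\<Sum>k\<in>insert i I. b k *\<^sub>R v k)"
    using fI ni aI bI u by (simp add: sum.insert a_def b_def)
  moreover have "(\<Sum>k\<in>insert i I. a k) = (\<Sum>k\<in>insert i I. b k)"
    using fI ni aI bI u by (simp add: sum.insert a_def b_def)
  ultimately have "a i = b i" using uniq[of "insert i I" a b i] I i by auto
  then show False by (simp add: a_def b_def)
qed

lemma C_mono_iff:
  assumes "I \<subseteq> D" "J \<subseteq> D"
  shows "C I \<subseteq> C J \<longleftrightarrow> I \<subseteq> J"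
proof
  assume "C I \<subseteq> C J"
  then show "I \<subseteq> J" using assms vert_in_hull hull_inc by (metis image_eqI subset_iff)
next
  assume "I \<subseteq> J" then show "C I \<subseteq> C J" by (simp add: hull_mono image_mono)
qed

lemma C_inj: "inj_on C (Pow D)"
proof (rule inj_onI)
  fix x y assume "x \<in> Pow D" "y \<in> Pow D" "C x = C y"
  then show "x = y" using C_mono_iff[of x y] C_mono_iff[of y x] by auto
qed

lemma C_psub_iff: "I \<subseteq> D \<Longrightarrow> J \<subseteq> D \<Longrightarrow> C I \<subset> C J \<longleftrightarrow> I \<subset> J"
  using C_mono_iff[of I J] C_mono_iff[of J I] by (auto simp: psubset_eq)

lemma faces: "{F. F face_of C D} = C ` Pow D"
proof
  show "{F. F face_of C D} \<subseteq> C ` Pow D"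
  proof
    fix F assume "F \<in> {F. F face_of C D}"
    then obtain c where c: "c \<subseteq> v ` D" "F = convex hull c"
      using face_of_convex_hull_affine_independent[OF vindep] by auto
    then have "c = v ` {i\<in>D. v i \<in> c}" by auto
    then show "F \<in> C ` Pow D" using c by (metis (no_types, lifting) Pow_iff image_eqI mem_Collect_eq subsetI)
  qed
  show "C ` Pow D \<subseteq> {F. F face_of C D}"
  proof
    fix F assume "F \<in> C ` Pow D"
    then obtain I where "I \<subseteq> D" "F = C I" by auto
    then show "F \<in> {F. F face_of C D}"
      using face_of_convex_hull_affine_independent[OF vindep, of F] image_mono[of I D v] by auto
  qed
qed

lemma aff_dim_C: assumes "I \<subseteq> D" shows "aff_dim (C I) = int (card I) - 1"
proof -
  have ind: "\<not> affine_dependent (v ` I)"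
    using vindep assms affine_dependent_subset image_mono by metis
  have "card (v ` I) = card I" using vinj assms by (meson card_image inj_on_subset)
  then show ?thesis using aff_dim_affine_independent[OF ind] by (simp add: aff_dim_convex_hull)
qed

lemma rank_C: assumes "I \<subseteq> J" "J \<subseteq> D" shows "face_rank (C I) (C J) = card J - card I"
proof -
  have "card I \<le> card J" using assms finD card_mono by blast
  then show ?thesis unfolding face_rank_def using assms aff_dim_C[of I] aff_dim_C[of J] by auto
qed

lemma g_fuel_one:
  "\<forall>I. I \<subseteq> D \<longrightarrow> face_rank (C I) (C D) < k \<longrightarrow> g_fuel k (C I) (C D) = 1"
proof (induction k)
  case 0 then show ?case by simp
next
  case (Suc k)
  show ?case
  proof (intro allI impI)
    fix I assume I: "I \<subseteq> D" and rk: "face_rank (C I) (C D) < Suc k"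
    show "g_fuel (Suc k) (C I) (C D) = 1"
    proof (cases "face_rank (C I) (C D) = 0")
      case True then show ?thesis by simp
    next
      case False
      define r where "r = face_rank (C I) (C D)"
      have r: "r = card D - card I" unfolding r_def using rank_C[OF I] by simp
      have set: "{G. G face_of C D \<and> C I \<subset> G} = C ` {J. J \<subseteq> D \<and> I \<subset> J}"
      proof -
        have "{G. G face_of C D \<and> C I \<subset> G} = {G \<in> C ` Pow D. C I \<subset> G}"
          using faces by blast
        also have "\<dots> = C ` {J. J \<subseteq> D \<and> I \<subset> J}"
        proof (intro equalityI subsetI)
          fix G assume "G \<in> {G \<in> C ` Pow D. C I \<subset> G}"
          then obtain J where J: "J \<subseteq> D" "G = C J" "C I \<subset> C J" by auto
          then have "I \<subset> J" using C_psub_iff[OF I J(1)] by simp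
          then show "G \<in> C ` {J. J \<subseteq> D \<and> I \<subset> J}" using J by auto
        next
          fix G assume "G \<in> C ` {J. J \<subseteq> D \<and> I \<subset> J}"
          then obtain J where J: "J \<subseteq> D" "G = C J" "I \<subset> J" by auto
          then have "C I \<subset> C J" using C_psub_iff[OF I J(1)] by simp
          then show "G \<in> {G \<in> C ` Pow D. C I \<subset> G}" using J by auto
        qed
        finally show ?thesis .
      qed
      have inj2: "inj_on C {J. J \<subseteq> D \<and> I \<subset> J}" using C_inj by (rule inj_on_subset) auto
      have "(\<Sum>G\<in>{G. G face_of C D \<and> C I \<subset> G}. [:-1, 1:] ^ (face_rank (C I) G - 1) * g_fuel k G (C D))
         = (\<Sum>J\<in>{J. J \<subseteq> D \<and> I \<subset> J}. [:-1, 1:] ^ (card J - card I - 1))"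
        unfolding set sum.reindex[OF inj2] o_def
      proof (rule sum.cong)
        fix J assume J: "J \<in> {J. J \<subseteq> D \<and> I \<subset> J}"
        then have "card I < card J" using finD by (auto intro: psubset_card_mono)
        moreover have "card J \<le> card D" using J card_mono[of D J] by auto
        ultimately have "face_rank (C J) (C D) < k" using rank_C[of J D] rk rank_C[OF I] J by auto
        then have "g_fuel k (C J) (C D) = 1" using Suc.IH J by auto
        then show "[:-1, 1:] ^ (face_rank (C I) (C J) - 1) * g_fuel k (C J) (C D) = [:-1, 1:] ^ (card J - card I - 1)"
          using rank_C[of I J] J by auto
      qed simp
      also have "\<dots> = (\<Sum>K\<in>{K. K \<subseteq> D - I \<and> K \<noteq> {}}. [:-1, 1:] ^ (card K - 1))"
      proof (rule sum.reindex_bij_witness[where i="\<lambda>K. I \<union> K" and j="\<lambda>J. J - I"])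
        fix J assume J: "J \<in> {J. J \<subseteq> D \<and> I \<subset> J}"
        show "I \<union> (J - I) = J" using J by auto
        show "J - I \<in> {K. K \<subseteq> D - I \<and> K \<noteq> {}}" using J by auto
        have "card (J - I) = card J - card I" using J finD by (intro card_Diff_subset) auto
        then show "[:-1, 1:] ^ (card (J - I) - 1) = [:-1, 1:] ^ (card J - card I - 1)" by simp
      next
        fix K assume K: "K \<in> {K. K \<subseteq> D - I \<and> K \<noteq> {}}"
        show "I \<union> K - I = K" using K by auto
        show "I \<union> K \<in> {J. J \<subseteq> D \<and> I \<subset> J}" using K I by auto
      qed
      also have "\<dots> = (\<Sum>i<card (D - I). [:0,1:] ^ i)" by (rule geom_poly) simp
      also have "card (D - I) = r" using r I by (simp add: card_Diff_subset finD)
      finally show ?thesis using False r_def g_trunc_geom[of r] by simp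
    qed
  qed
qed

lemma g_interval_one: "I \<subseteq> D \<Longrightarrow> g_interval (C I) (C D) = 1"
  unfolding g_interval_def by (rule g_fuel_one[rule_format]) simp_all

end


context splx begin

lemma Par_eq: assumes I: "I \<subseteq> D" shows "Par v I m = (\<Union>J\<in>Pow I. Opn v J m)"
proof (intro equalityI subsetI)
  fix y assume "y \<in> Par v I m"
  then obtain c where c: "y \<in> lattice_pts" "\<forall>i\<in>I. 0 \<le> c i \<and> c i < 1"
      "y = (\<Sum>i\<in>I. c i *\<^sub>R v i)" "(\<Sum>i\<in>I. c i) = real m"
    unfolding Par_def by blast
  define J where "J = {i\<in>I. 0 < c i}"
  have fI: "finite I" using finD[OF I] .
  have z: "c i = 0" if "i \<in> I - J" for i using that c(2) J_def by force
  have s1: "(\<Sum>i\<in>J. c i *\<^sub>R v i) = (\<Sum>i\<in>I. c i *\<^sub>R v i)"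
    by (rule sum.mono_neutral_left) (use fI z J_def in auto)
  have s2: "(\<Sum>i\<in>J. c i) = (\<Sum>i\<in>I. c i)"
    by (rule sum.mono_neutral_left) (use fI z J_def in auto)
  have "y \<in> Opn v J m" unfolding Opn_def using c s1 s2 J_def by auto
  moreover have "J \<in> Pow I" using J_def by auto
  ultimately show "y \<in> (\<Union>J\<in>Pow I. Opn v J m)" by blast
next
  fix y assume "y \<in> (\<Union>J\<in>Pow I. Opn v J m)"
  then obtain J c where J: "J \<subseteq> I" and c: "y \<in> lattice_pts" "\<forall>i\<in>J. 0 < c i \<and> c i < 1"
      "y = (\<Sum>i\<in>J. c i *\<^sub>R v i)" "(\<Sum>i\<in>J. c i) = real m"
    unfolding Opn_def by blast
  define a where "a = (\<lambda>i. if i \<in> J then c i else 0)"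
  have fI: "finite I" using finD[OF I] .
  have "(\<Sum>i\<in>I. a i *\<^sub>R v i) = (\<Sum>i\<in>I. if i \<in> J then c i *\<^sub>R v i else 0)"
    unfolding a_def by (intro sum.cong) auto
  also have "\<dots> = (\<Sum>i\<in>J. c i *\<^sub>R v i)" using sum_if_restrict[OF fI J] .
  finally have s1: "(\<Sum>i\<in>I. a i *\<^sub>R v i) = y" using c by simp
  have s2: "(\<Sum>i\<in>I. a i) = real m" unfolding a_def using sum_if_restrict[OF fI J, of c] c by simp
  show "y \<in> Par v I m" unfolding Par_def using c s1 s2
    by (auto intro!: exI[of _ a] simp: a_def less_imp_le)
qed

lemma Opn_disj:
  assumes I: "I \<subseteq> D" and J: "J \<subseteq> I" and J': "J' \<subseteq> I" and y: "y \<in> Opn v J m" "y \<in> Opn v J' m"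
  shows "J = J'"
proof -
  obtain c where c: "\<forall>i\<in>J. 0 < c i \<and> c i < 1" "y = (\<Sum>i\<in>J. c i *\<^sub>R v i)" "(\<Sum>i\<in>J. c i) = real m"
    using y(1) unfolding Opn_def by blast
  obtain c' where c': "\<forall>i\<in>J'. 0 < c' i \<and> c' i < 1" "y = (\<Sum>i\<in>J'. c' i *\<^sub>R v i)" "(\<Sum>i\<in>J'. c' i) = real m"
    using y(2) unfolding Opn_def by blast
  have fI: "finite I" using finD[OF I] .
  define a where "a = (\<lambda>i. if i \<in> J then c i else 0)"
  define b where "b = (\<lambda>i. if i \<in> J' then c' i else 0)"
  have "(\<Sum>i\<in>I. a i *\<^sub>R v i) = (\<Sum>i\<in>I. if i \<in> J then c i *\<^sub>R v i else 0)"
    unfolding a_def by (intro sum.cong) auto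
  also have "\<dots> = y" using sum_if_restrict[OF fI J] c by simp
  finally have a1: "(\<Sum>i\<in>I. a i *\<^sub>R v i) = y" .
  have "(\<Sum>i\<in>I. b i *\<^sub>R v i) = (\<Sum>i\<in>I. if i \<in> J' then c' i *\<^sub>R v i else 0)"
    unfolding b_def by (intro sum.cong) auto
  also have "\<dots> = y" using sum_if_restrict[OF fI J'] c' by simp
  finally have b1: "(\<Sum>i\<in>I. b i *\<^sub>R v i) = y" .
  have a2: "(\<Sum>i\<in>I. a i) = real m" unfolding a_def using sum_if_restrict[OF fI J, of c] c by simp
  have b2: "(\<Sum>i\<in>I. b i) = real m" unfolding b_def using sum_if_restrict[OF fI J', of c'] c' by simp
  have ab: "a i = b i" if "i \<in> I" for i using uniq[OF I, of a b i] a1 b1 a2 b2 that by simp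
  have "J = {i\<in>I. 0 < a i}" using J c(1) by (auto simp: a_def)
  also have "\<dots> = {i\<in>I. 0 < b i}" using ab by auto
  also have "\<dots> = J'" using J' c'(1) by (auto simp: b_def)
  finally show ?thesis .
qed

lemma card_Par: assumes I: "I \<subseteq> D" shows "card (Par v I m) = (\<Sum>J\<in>Pow I. card (Opn v J m))"
proof -
  have fI: "finite I" using finD[OF I] .
  have "card (\<Union>J\<in>Pow I. Opn v J m) = (\<Sum>J\<in>Pow I. card (Opn v J m))"
  proof (rule card_UN_disjoint)
    show "finite (Pow I)" using fI by simp
    show "\<forall>J\<in>Pow I. finite (Opn v J m)" using fI finite_Opn finite_subset by blast
    show "\<forall>J\<in>Pow I. \<forall>J'\<in>Pow I. J \<noteq> J' \<longrightarrow> Opn v J m \<inter> Opn v J' m = {}"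
      using Opn_disj[OF I] by blast
  qed
  then show ?thesis using Par_eq[OF I] by simp
qed

end


lemma floor_frac_nat: "0 \<le> c \<Longrightarrow> c < 1 \<Longrightarrow> \<lfloor>c + real n\<rfloor> = int n"
  by (simp add: floor_eq_iff)

context splx begin

lemma Ehrhart_count:
  assumes I: "I \<subseteq> D" and Ine: "I \<noteq> {}"
  shows "card (lattice_pts \<inter> (\<lambda>x. real j *\<^sub>R x) ` C I)
       = (\<Sum>m\<in>{..j}. card (Par v I m) * card (Nset I (j - m)))"
proof -
  have fI: "finite I" using finD[OF I] .
  define T where "T = Sigma {..j} (\<lambda>m. Par v I m \<times> Nset I (j - m))"
  define f where "f = (\<lambda>(m::nat, y::real^'n, n::nat \<Rightarrow> nat). y + (\<Sum>i\<in>I. real (n i) *\<^sub>R v i))"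
  have vL: "v i \<in> lattice_pts" if "i \<in> I" for i using vlat I that by auto
  have nL: "(\<Sum>i\<in>I. real (n i) *\<^sub>R v i) \<in> lattice_pts" for n
    by (intro lat_sum lat_scale_nat vL)
  have dec: "\<exists>c. (\<forall>i\<in>I. 0 \<le> c i \<and> c i < 1) \<and> y = (\<Sum>i\<in>I. c i *\<^sub>R v i) \<and> (\<Sum>i\<in>I. c i) = real m
       \<and> f (m, y, n) = (\<Sum>i\<in>I. (c i + real (n i)) *\<^sub>R v i)
       \<and> (\<Sum>i\<in>I. (c i + real (n i))) = real j \<and> n \<in> I \<rightarrow>\<^sub>E UNIV \<and> m \<le> j \<and> y \<in> lattice_pts
       \<and> (\<Sum>i\<in>I. n i) = j - m"
    if "(m, y, n) \<in> T" for m y n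
  proof -
    from that have m: "m \<le> j" and y: "y \<in> Par v I m" and n: "n \<in> Nset I (j - m)"
      unfolding T_def by auto
    obtain c where c: "y \<in> lattice_pts" "\<forall>i\<in>I. 0 \<le> c i \<and> c i < 1" "y = (\<Sum>i\<in>I. c i *\<^sub>R v i)" "(\<Sum>i\<in>I. c i) = real m"
      using y unfolding Par_def mem_Collect_eq by (elim conjE exE) blast
    have nn: "n \<in> I \<rightarrow>\<^sub>E UNIV" "(\<Sum>i\<in>I. n i) = j - m" using n unfolding Nset_def by auto
    have "f (m, y, n) = (\<Sum>i\<in>I. (c i + real (n i)) *\<^sub>R v i)"
      unfolding f_def using c by (simp add: scaleR_add_left sum.distrib)
    moreover have "(\<Sum>i\<in>I. (c i + real (n i))) = real j"
    proof -
      have "(\<Sum>i\<in>I. (c i + real (n i))) = real m + real (\<Sum>i\<in>I. n i)"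
        using c by (simp add: sum.distrib)
      also have "\<dots> = real j" using nn m by simp
      finally show ?thesis .
    qed
    ultimately show ?thesis using c nn m by (intro exI[of _ c] conjI) assumption+
  qed
  have inj: "inj_on f T"
  proof (rule inj_onI)
    fix p q assume p: "p \<in> T" and q: "q \<in> T" and e: "f p = f q"
    obtain m y n where pe: "p = (m, y, n)" by (cases p) auto
    obtain m' y' n' where qe: "q = (m', y', n')" by (cases q) auto
    have p': "(m, y, n) \<in> T" using p pe by simp
    obtain c where c: "\<forall>i\<in>I. 0 \<le> c i \<and> c i < 1" "y = (\<Sum>i\<in>I. c i *\<^sub>R v i)" "(\<Sum>i\<in>I. c i) = real m"
       "f (m, y, n) = (\<Sum>i\<in>I. (c i + real (n i)) *\<^sub>R v i)"
       "(\<Sum>i\<in>I. (c i + real (n i))) = real j" "n \<in> I \<rightarrow>\<^sub>E UNIV" "m \<le> j" "y \<in> lattice_pts"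
       "(\<Sum>i\<in>I. n i) = j - m"
      using dec[OF p'] by blast
    have q': "(m', y', n') \<in> T" using q qe by simp
    obtain c' where c': "\<forall>i\<in>I. 0 \<le> c' i \<and> c' i < 1" "y' = (\<Sum>i\<in>I. c' i *\<^sub>R v i)" "(\<Sum>i\<in>I. c' i) = real m'"
       "f (m', y', n') = (\<Sum>i\<in>I. (c' i + real (n' i)) *\<^sub>R v i)"
       "(\<Sum>i\<in>I. (c' i + real (n' i))) = real j" "n' \<in> I \<rightarrow>\<^sub>E UNIV" "m' \<le> j" "y' \<in> lattice_pts"
       "(\<Sum>i\<in>I. n' i) = j - m'"
      using dec[OF q'] by blast
    have ff: "f (m, y, n) = f (m', y', n')" using e pe qe by simp
    have e1: "(\<Sum>i\<in>I. (c i + real (n i)) *\<^sub>R v i) = (\<Sum>i\<in>I. (c' i + real (n' i)) *\<^sub>R v i)"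
      using ff unfolding c(4) c'(4) .
    have e2: "(\<Sum>i\<in>I. (c i + real (n i))) = (\<Sum>i\<in>I. (c' i + real (n' i)))"
      unfolding c(5) c'(5) ..
    have mu: "c i + real (n i) = c' i + real (n' i)" if "i \<in> I" for i
      using uniq[OF I e1 e2 that] .
    have nn: "n i = n' i" if "i \<in> I" for i
    proof -
      have "int (n i) = \<lfloor>c i + real (n i)\<rfloor>" using c(1) that floor_frac_nat by simp
      also have "\<dots> = \<lfloor>c' i + real (n' i)\<rfloor>" using mu that by simp
      also have "\<dots> = int (n' i)" using c'(1) that floor_frac_nat by simp
      finally show ?thesis by simp
    qed
    then have "n = n'" using c(6) c'(6) by (intro PiE_ext) auto
    moreover have cc: "c i = c' i" if "i \<in> I" for i using mu nn that by simp
    moreover have "y = y'" using c(2) c'(2) cc by simp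
    moreover have "real m = real m'" using c(3) c'(3) cc by simp
    ultimately show "p = q" using pe qe by simp
  qed
  have img: "f ` T = lattice_pts \<inter> (\<lambda>x. real j *\<^sub>R x) ` C I"
  proof (intro equalityI subsetI)
    fix x assume "x \<in> f ` T"
    then obtain m y n where p: "(m, y, n) \<in> T" and x: "x = f (m, y, n)" by auto
    obtain c where c: "\<forall>i\<in>I. 0 \<le> c i \<and> c i < 1" "y = (\<Sum>i\<in>I. c i *\<^sub>R v i)" "(\<Sum>i\<in>I. c i) = real m"
       "f (m, y, n) = (\<Sum>i\<in>I. (c i + real (n i)) *\<^sub>R v i)"
       "(\<Sum>i\<in>I. (c i + real (n i))) = real j" "n \<in> I \<rightarrow>\<^sub>E UNIV" "m \<le> j" "y \<in> lattice_pts"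
       "(\<Sum>i\<in>I. n i) = j - m"
      using dec[OF p] by blast
    have xL: "x \<in> lattice_pts" using x c(8) nL lat_add unfolding f_def by auto
    have "x \<in> (\<lambda>x. real j *\<^sub>R x) ` C I"
    proof (cases "j = 0")
      case True
      then have m0: "m = 0" using c(7) by simp
      have "c i = 0" if "i \<in> I" for i
        using c(1,3) m0 fI that sum_nonneg_eq_0_iff[of I c] by auto
      moreover have "n i = 0" if "i \<in> I" for i using c(9) True fI that by simp
      ultimately have "x = 0" using x c(4) by simp
      moreover obtain i0 where "i0 \<in> I" using Ine by auto
      then have "v i0 \<in> C I" by (simp add: hull_inc)
      ultimately have "x = real j *\<^sub>R v i0" "v i0 \<in> C I" using True by auto
      then show ?thesis by (rule image_eqI)
    next
      case False
      define u where "u = (\<lambda>i. (c i + real (n i)) / real j)"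
      have "(\<Sum>i\<in>I. u i) = 1" using c(5) False by (simp add: u_def sum_divide_distrib[symmetric])
      moreover have "\<forall>i\<in>I. 0 \<le> u i" using c(1) by (simp add: u_def)
      ultimately have z: "(\<Sum>i\<in>I. u i *\<^sub>R v i) \<in> C I" using conv_char[OF I] by blast
      have "real j *\<^sub>R (\<Sum>i\<in>I. u i *\<^sub>R v i) = x"
        using False x c(4) by (simp add: scaleR_sum_right u_def)
      then show ?thesis using z by (intro image_eqI[of x _ "\<Sum>i\<in>I. u i *\<^sub>R v i"]) auto
    qed
    then show "x \<in> lattice_pts \<inter> (\<lambda>x. real j *\<^sub>R x) ` C I" using xL by simp
  next
    fix x assume x: "x \<in> lattice_pts \<inter> (\<lambda>x. real j *\<^sub>R x) ` C I"
    then obtain z where z: "z \<in> C I" "x = real j *\<^sub>R z" and xL: "x \<in> lattice_pts" by auto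
    obtain u where u: "\<forall>i\<in>I. 0 \<le> u i" "(\<Sum>i\<in>I. u i) = 1" "z = (\<Sum>i\<in>I. u i *\<^sub>R v i)"
      using conv_char[OF I] z by blast
    define mu where "mu = (\<lambda>i. real j * u i)"
    define n where "n = restrict (\<lambda>i. nat \<lfloor>mu i\<rfloor>) I"
    define c where "c = (\<lambda>i. mu i - of_int \<lfloor>mu i\<rfloor>)"
    have mu0: "0 \<le> mu i" if "i \<in> I" for i using u that by (simp add: mu_def)
    have nr: "real (n i) = of_int \<lfloor>mu i\<rfloor>" if "i \<in> I" for i using mu0[OF that] that by (simp add: n_def)
    have cb: "0 \<le> c i \<and> c i < 1" for i unfolding c_def by linarith
    have mus: "(\<Sum>i\<in>I. mu i) = real j" using u by (simp add: mu_def sum_distrib_left[symmetric])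
    have xs: "x = (\<Sum>i\<in>I. mu i *\<^sub>R v i)" using z u by (simp add: mu_def scaleR_sum_right)
    define s where "s = (\<Sum>i\<in>I. n i)"
    have sr: "real s = (\<Sum>i\<in>I. of_int \<lfloor>mu i\<rfloor>)" unfolding s_def using nr by simp
    have "(\<Sum>i\<in>I. of_int \<lfloor>mu i\<rfloor>) \<le> (\<Sum>i\<in>I. mu i)" by (intro sum_mono) simp
    then have sj: "s \<le> j" using sr mus by linarith
    define m where "m = j - s"
    have cs: "(\<Sum>i\<in>I. c i) = real m"
      unfolding c_def m_def using sj sr mus by (simp add: sum_subtractf)
    define y where "y = (\<Sum>i\<in>I. c i *\<^sub>R v i)"
    have yx: "y = x - (\<Sum>i\<in>I. real (n i) *\<^sub>R v i)"
      unfolding y_def xs c_def using nr by (simp add: scaleR_diff_left sum_subtractf)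
    have yL: "y \<in> lattice_pts" unfolding yx by (intro lat_diff xL nL)
    have "y \<in> Par v I m" unfolding Par_def mem_Collect_eq using yL cb cs y_def
      by (intro conjI exI[of _ c]) auto
    moreover have "n \<in> Nset I (j - m)"
    proof -
      have "n \<in> I \<rightarrow>\<^sub>E UNIV" unfolding n_def by simp
      moreover have "(\<Sum>i\<in>I. n i) = j - m" using sj unfolding m_def s_def by simp
      ultimately show ?thesis unfolding Nset_def by simp
    qed
    moreover have "m \<le> j" unfolding m_def by simp
    ultimately have "(m, y, n) \<in> T" unfolding T_def by auto
    moreover have "f (m, y, n) = x" unfolding f_def using yx by simp
    ultimately show "x \<in> f ` T" using rev_image_eqI[of "(m, y, n)" T x f] by auto
  qed
  have "card (lattice_pts \<inter> (\<lambda>x. real j *\<^sub>R x) ` C I) = card T"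
    using card_image[OF inj] img by simp
  also have "\<dots> = (\<Sum>m\<in>{..j}. card (Par v I m \<times> Nset I (j - m)))"
    unfolding T_def by (rule card_SigmaI) (auto simp: finite_Par finite_Nset fI)
  also have "\<dots> = (\<Sum>m\<in>{..j}. card (Par v I m) * card (Nset I (j - m)))"
    by (simp add: card_cartesian_product)
  finally show ?thesis .
qed

lemma hstar_C:
  assumes I: "I \<subseteq> D"
  shows "hstar (C I) = Abs_fps (\<lambda>m. int (card (Par v I m)))"
proof (cases "I = {}")
  case True
  have "Par v {} m = (if m = 0 then {0} else {})" for m
    unfolding Par_def using lat_zero by auto
  then have "Abs_fps (\<lambda>m. int (card (Par v I m))) = 1" using True by (intro fps_ext) simp
  then show ?thesis using True by (simp add: hstar_def)
next
  case False
  have fI: "finite I" using finD[OF I] .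
  have ne: "C I \<noteq> {}" using False by simp
  have cI: "card I \<ge> 1" using False fI by (simp add: Suc_leI card_gt_0_iff)
  have ad: "nat (aff_dim (C I)) + 1 = card I" using aff_dim_C[OF I] cI by simp
  have "Abs_fps (\<lambda>j. int (card (lattice_pts \<inter> (\<lambda>x. real j *\<^sub>R x) ` C I)))
     = Abs_fps (\<lambda>m. int (card (Par v I m))) * Abs_fps (\<lambda>r. int (card (Nset I r)))"
  proof (rule fps_ext)
    fix j
    have "int (card (lattice_pts \<inter> (\<lambda>x. real j *\<^sub>R x) ` C I))
        = (\<Sum>m\<in>{..j}. int (card (Par v I m)) * int (card (Nset I (j - m))))"
      unfolding Ehrhart_count[OF I False] of_nat_sum of_nat_mult ..
    then show "fps_nth (Abs_fps (\<lambda>j. int (card (lattice_pts \<inter> (\<lambda>x. real j *\<^sub>R x) ` C I)))) j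
        = fps_nth (Abs_fps (\<lambda>m. int (card (Par v I m))) * Abs_fps (\<lambda>r. int (card (Nset I r)))) j"
      unfolding fps_mult_nth atLeast0AtMost fps_nth_Abs_fps .
  qed
  moreover have "hstar (C I) = (1 - fps_X) ^ card I *
      Abs_fps (\<lambda>j. int (card (lattice_pts \<inter> (\<lambda>x. real j *\<^sub>R x) ` C I)))"
    unfolding hstar_def if_not_P[OF ne] ad ..
  ultimately have "hstar (C I) = Abs_fps (\<lambda>m. int (card (Par v I m)))
       * ((1 - fps_X) ^ card I * Abs_fps (\<lambda>r. int (card (Nset I r))))"
    by (simp only: mult.left_commute)
  then show ?thesis unfolding Nset_fps[OF fI] by simp
qed

end


theorem proposition4p6:
  fixes v :: "nat \<Rightarrow> real ^ 'n"
  defines "d \<equiv> CARD('n)"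
  assumes vlat: "\<forall>i\<le>d. v i \<in> lattice_pts"
    and vinj: "inj_on v {..d}"
    and vindep: "\<not> affine_dependent (v ` {..d})"
  shows "Stilde (convex hull (v ` {..d})) =
           Abs_fps (\<lambda>m. int (card {y \<in> lattice_pts. \<exists>c::nat \<Rightarrow> real.
              (\<forall>i\<le>d. 0 < c i \<and> c i < 1) \<and>
              y = (\<Sum>i\<le>d. c i *\<^sub>R v i) \<and> (\<Sum>i\<le>d. c i) = real m}))
       \<and> (\<forall>n. (\<forall>m\<ge>n. fps_nth (hstar (convex hull (v ` {..d}))) m = 0)
              \<longrightarrow> (\<forall>m\<ge>n. fps_nth (Stilde (convex hull (v ` {..d}))) m = 0))"
proof -
  interpret splx v d using vlat vinj vindep by unfold_locales
  have neg: "(-1::int fps) ^ k = fps_const ((-1) ^ k)" for k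
    by (induction k) (simp_all add: fps_const_mult[symmetric] fps_const_neg)
  have ball_eq: "(\<forall>i\<in>{..d}. Q i) \<longleftrightarrow> (\<forall>i\<le>d. Q i)" for Q :: "nat \<Rightarrow> bool" by auto
  have Sfps: "Stilde (C D) = Abs_fps (\<lambda>m. int (card (Opn v D m)))"
  proof -
    have "Stilde (C D) = (\<Sum>I\<in>Pow D. (-1) ^ face_rank (C I) (C D) * hstar (C I) * fps_of_poly (g_interval (C I) (C D)))"
      unfolding Stilde_def faces sum.reindex[OF C_inj] o_def ..
    also have "\<dots> = (\<Sum>I\<in>Pow D. fps_const ((-1) ^ (card D - card I)) * Abs_fps (\<lambda>m. int (card (Par v I m))))"
    proof (rule sum.cong)
      fix I assume "I \<in> Pow D"
      then have I: "I \<subseteq> D" by simp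
      show "(-1) ^ face_rank (C I) (C D) * hstar (C I) * fps_of_poly (g_interval (C I) (C D))
          = fps_const ((-1) ^ (card D - card I)) * Abs_fps (\<lambda>m. int (card (Par v I m)))"
        unfolding rank_C[OF I order_refl] hstar_C[OF I] g_interval_one[OF I] neg by simp
    qed simp
    also have "\<dots> = Abs_fps (\<lambda>m. \<Sum>I\<in>Pow D. (-1) ^ (card D - card I) * int (card (Par v I m)))"
      by (rule fps_ext) (simp add: fps_sum_nth)
    also have "\<dots> = Abs_fps (\<lambda>m. int (card (Opn v D m)))"
    proof -
      have "(\<Sum>I\<in>Pow D. (-1) ^ (card D - card I) * int (card (Par v I m))) = int (card (Opn v D m))" for m
      proof -
        have "(\<Sum>I\<in>Pow D. (-1) ^ (card D - card I) * int (card (Par v I m)))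
            = (\<Sum>I\<in>Pow D. (-1) ^ (card D - card I) * (\<Sum>J\<in>Pow I. int (card (Opn v J m))))"
          by (rule sum.cong) (simp_all add: card_Par)
        also have "\<dots> = int (card (Opn v D m))"
          by (rule incl_excl) simp
        finally show ?thesis .
      qed
      then show ?thesis by simp
    qed
    finally show ?thesis .
  qed
  have OE: "Opn v D m = {y \<in> lattice_pts. \<exists>c::nat \<Rightarrow> real.
              (\<forall>i\<le>d. 0 < c i \<and> c i < 1) \<and>
              y = (\<Sum>i\<le>d. c i *\<^sub>R v i) \<and> (\<Sum>i\<le>d. c i) = real m}" for m
    by (simp only: Opn_def ball_eq)
  show ?thesis
  proof
    show "Stilde (convex hull (v ` {..d})) = Abs_fps (\<lambda>m. int (card {y \<in> lattice_pts. \<exists>c::nat \<Rightarrow> real.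
              (\<forall>i\<le>d. 0 < c i \<and> c i < 1) \<and>
              y = (\<Sum>i\<le>d. c i *\<^sub>R v i) \<and> (\<Sum>i\<le>d. c i) = real m}))"
      unfolding Sfps OE[symmetric] ..
  next
    show "\<forall>n. (\<forall>m\<ge>n. fps_nth (hstar (convex hull (v ` {..d}))) m = 0)
              \<longrightarrow> (\<forall>m\<ge>n. fps_nth (Stilde (convex hull (v ` {..d}))) m = 0)"
    proof (intro allI impI)
      fix n m assume h: "\<forall>m\<ge>n. fps_nth (hstar (C D)) m = 0" and mn: "n \<le> m"
      have "card (Par v D m) = 0" using h mn hstar_C[of D] by simp
      then have "Par v D m = {}" using finite_Par[of D v m] by simp
      then have "Opn v D m = {}" using Opn_sub_Par[of v D m] by blast
      then show "fps_nth (Stilde (C D)) m = 0" unfolding Sfps by simp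
    qed
  qed
qed


end
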